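(* For any $z>1/\rho$ and any $t\ge0$, $$P_t(z)-P_{t+1}(z)\ge(\rho z-1)K_t(z).$$
   Context: $m$-twist system with parameter $\rho\in(0,1/2]$ on $n$ agents: at each time $t$ the agents are relabeled so that their positions satisfy $x_1(t)\le\dots\le x_n(t)$. A partition of $[n]$ into at most $m$ intervals of consecutive indices $[u_{t,l},v_{t,l}]$ (blocks) is given. The next sorted positions $y_i=x_i(t+1)$ (agents keep their ranks) satisfy, for every block $[u,v]$ and $i\in[u,v]$, $$(1-\rho)x_u+\rho x_{\min\{i+1,v\}}\le y_i\le\rho x_{\max\{i-1,u\}}+(1-\rho)x_v.$$ Define $P_t(z)=\sum_{k=1}^nx_k(t)z^k$. Let $v(k)$ be the right endpoint of the block containing $k$ at time $t$, and $K_t(z)=\sum_{k=1}^n(x_{v(k)}(t)-x_k(t))z^k$. *)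

theory Defs
  imports Complex_Main
begin

text \<open>Agents are indexed 1..n; positions at a time are a function nat => real.\<close>

definition sorted_pos :: "nat \<Rightarrow> (nat \<Rightarrow> real) \<Rightarrow> bool" where
  "sorted_pos n x \<longleftrightarrow> (\<forall>i j. 1 \<le> i \<longrightarrow> i \<le> j \<longrightarrow> j \<le> n \<longrightarrow> x i \<le> x j)"

text \<open>A partition of {1..n} into at most m blocks of consecutive indices;
  a block is the pair (u,v) standing for the interval [u,v].\<close>
definition interval_partition :: "nat \<Rightarrow> nat \<Rightarrow> (nat \<times> nat) set \<Rightarrow> bool" where
  "interval_partition n m Bs \<longleftrightarrow> finite Bs \<and> card Bs \<le> m \<and>
     (\<forall>b\<in>Bs. 1 \<le> fst b \<and> fst b \<le> snd b \<and> snd b \<le> n) \<and>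
     (\<forall>k\<in>{1..n}. \<exists>!b. b \<in> Bs \<and> fst b \<le> k \<and> k \<le> snd b)"

definition blk_right :: "(nat \<times> nat) set \<Rightarrow> nat \<Rightarrow> nat" where
  "blk_right Bs k = snd (THE b. b \<in> Bs \<and> fst b \<le> k \<and> k \<le> snd b)"

text \<open>One step of the m-twist system: x = sorted positions at time t, y at time t+1.\<close>
definition twist_step :: "real \<Rightarrow> (nat \<times> nat) set \<Rightarrow> (nat \<Rightarrow> real) \<Rightarrow> (nat \<Rightarrow> real) \<Rightarrow> bool" where
  "twist_step \<rho> Bs x y \<longleftrightarrow>
     (\<forall>(u,v)\<in>Bs. \<forall>i\<in>{u..v}.
        (1 - \<rho>) * x u + \<rho> * x (min (i+1) v) \<le> y i \<and>
        y i \<le> \<rho> * x (max (i-1) u) + (1 - \<rho>) * x v)"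

definition Ppoly :: "nat \<Rightarrow> (nat \<Rightarrow> real) \<Rightarrow> real \<Rightarrow> real" where
  "Ppoly n x z = (\<Sum>k=1..n. x k * z ^ k)"

definition Kpoly :: "nat \<Rightarrow> (nat \<times> nat) set \<Rightarrow> (nat \<Rightarrow> real) \<Rightarrow> real \<Rightarrow> real" where
  "Kpoly n Bs x z = (\<Sum>k=1..n. (x (blk_right Bs k) - x k) * z ^ k)"

end

theory Submission
  imports Defs
begin

lemma blk_the:
  assumes "interval_partition n m Bs" "k \<in> {1..n}"
  shows "(THE b. b \<in> Bs \<and> fst b \<le> k \<and> k \<le> snd b) \<in> Bs \<and>
         fst (THE b. b \<in> Bs \<and> fst b \<le> k \<and> k \<le> snd b) \<le> k \<and>
         k \<le> snd (THE b. b \<in> Bs \<and> fst b \<le> k \<and> k \<le> snd b)"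
proof -
  have "\<exists>!b. b \<in> Bs \<and> fst b \<le> k \<and> k \<le> snd b" using assms unfolding interval_partition_def by blast
  from theI'[OF this] show ?thesis by blast
qed

lemma blk_eq:
  assumes "interval_partition n m Bs" "k \<in> {1..n}" "b \<in> Bs" "fst b \<le> k" "k \<le> snd b"
  shows "(THE b. b \<in> Bs \<and> fst b \<le> k \<and> k \<le> snd b) = b"
proof -
  have "\<exists>!b. b \<in> Bs \<and> fst b \<le> k \<and> k \<le> snd b" using assms unfolding interval_partition_def by blast
  from the1_equality[OF this] show ?thesis using assms by blast
qed

lemma blk_bound:
  assumes "interval_partition n m Bs" "b \<in> Bs"
  shows "1 \<le> fst b \<and> fst b \<le> snd b \<and> snd b \<le> n"
  using assms unfolding interval_partition_def by blast

theorem lemma4: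
  fixes n m :: nat and \<rho> z :: real
    and x :: "nat \<Rightarrow> nat \<Rightarrow> real"
    and B :: "nat \<Rightarrow> (nat \<times> nat) set"
  assumes rho: "0 < \<rho>" "\<rho> \<le> 1/2"
    and sorted: "\<And>t. sorted_pos n (x t)"
    and part: "\<And>t. interval_partition n m (B t)"
    and step: "\<And>t. twist_step \<rho> (B t) (x t) (x (Suc t))"
    and z: "z > 1/\<rho>"
  shows "Ppoly n (x t) z - Ppoly n (x (Suc t)) z \<ge> (\<rho> * z - 1) * Kpoly n (B t) (x t) z"
proof -
  define X where "X = x t"
  define Y where "Y = x (Suc t)"
  define Bs where "Bs = B t"
  define bl where "bl k = (THE b. b \<in> Bs \<and> fst b \<le> k \<and> k \<le> snd b)" for k
  define D where "D k = X (snd (bl k)) - X k" for k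
  define f0 where "f0 k = (if fst (bl k) < k then D (k - 1) else 0)" for k
  have P: "interval_partition n m Bs" using part Bs_def by simp
  have "1/\<rho> > 0" using rho by simp
  hence zpos: "z > 0" using z by linarith
  have bl: "bl k \<in> Bs \<and> fst (bl k) \<le> k \<and> k \<le> snd (bl k)" if "k \<in> {1..n}" for k
    using blk_the[OF P that] unfolding bl_def by blast
  have blb: "1 \<le> fst (bl k) \<and> fst (bl k) \<le> snd (bl k) \<and> snd (bl k) \<le> n" if "k \<in> {1..n}" for k
    using blk_bound[OF P] bl[OF that] by blast
  have bleq: "bl k = b" if "k \<in> {1..n}" "b \<in> Bs" "fst b \<le> k" "k \<le> snd b" for k b
    using blk_eq[OF P that] unfolding bl_def by blast
  have Dnn: "D k \<ge> 0" if "k \<in> {1..n}" for k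
    using sorted[of t] bl[OF that] blb[OF that] unfolding sorted_pos_def D_def X_def by auto
  have K: "Kpoly n (B t) (x t) z = (\<Sum>k=1..n. D k * z ^ k)"
    unfolding Kpoly_def D_def bl_def blk_right_def X_def Bs_def by simp
  have tm: "X k - Y k \<ge> - D k + \<rho> * f0 k" if k: "k \<in> {1..n}" for k
  proof -
    obtain u v where uv: "bl k = (u,v)" by fastforce
    have inB: "(u,v) \<in> Bs" "u \<le> k" "k \<le> v" using bl[OF k] uv by auto
    have "Y k \<le> \<rho> * X (max (k-1) u) + (1 - \<rho>) * X v"
      using step[of t] inB unfolding twist_step_def X_def Y_def Bs_def by fastforce
    show ?thesis
    proof (cases "u < k")
      case True
      have k1: "k - 1 \<in> {1..n}" using True inB blb[OF k] uv k by auto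
      have "bl (k-1) = (u,v)" using bleq[OF k1 inB(1)] True inB by auto
      hence "D (k-1) = X v - X (k-1)" unfolding D_def by simp
      moreover have "f0 k = D (k-1)" using True uv unfolding f0_def by simp
      moreover have "max (k-1) u = k-1" using True by simp
      moreover have "D k = X v - X k" using uv unfolding D_def by simp
      ultimately have "\<rho> * D (k-1) = \<rho> * X v - \<rho> * X (k-1)" "f0 k = D (k-1)"
        "max (k-1) u = k-1" "D k = X v - X k" "(1-\<rho>) * X v = X v - \<rho> * X v"
        by (simp_all add: right_diff_distrib left_diff_distrib)
      then show ?thesis using \<open>Y k \<le> _\<close> by (simp only:)
    next
      case False
      hence "u = k" using inB by simp
      have "f0 k = 0" using False uv unfolding f0_def by simp
      moreover have "D k = X v - X k" using uv unfolding D_def by simp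
      moreover have "D k \<ge> 0" using Dnn[OF k] .
      moreover have "\<rho> * (X v - X k) \<ge> 0" using rho \<open>D k = X v - X k\<close> \<open>D k \<ge> 0\<close> by simp
      moreover have "max (k-1) u = k" using \<open>u = k\<close> by simp
      moreover have "\<rho> * X k + (1 - \<rho>) * X v = X v - \<rho> * (X v - X k)" by (simp add: algebra_simps)
      ultimately show ?thesis using \<open>Y k \<le> _\<close> by simp
    qed
  qed
  have shift: "(\<Sum>k=1..n. f0 k * z ^ k) = z * (\<Sum>k=1..n. D k * z ^ k)"
  proof (cases "n = 0")
    case True then show ?thesis by simp
  next
    case False
    have "(\<Sum>k=1..n. f0 k * z ^ k) = (\<Sum>j<n. f0 (Suc j) * z ^ Suc j)"
      using sum.atLeast1_atMost_eq[of "\<lambda>k. f0 k * z ^ k" n] by simp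
    also have "\<dots> = (\<Sum>j<n. if 1 \<le> j then D j * z ^ Suc j else 0)"
    proof (rule sum.cong[OF refl])
      fix j assume j: "j \<in> {..<n}"
      show "f0 (Suc j) * z ^ Suc j = (if 1 \<le> j then D j * z ^ Suc j else 0)"
      proof (cases "j = 0")
        case True
        then show ?thesis using blb[of 1] False unfolding f0_def by auto
      next
        case j0: False
        have jr: "j \<in> {1..n}" "Suc j \<in> {1..n}" using j j0 by auto
        show ?thesis
        proof (cases "fst (bl (Suc j)) < Suc j")
          case True
          have "bl j = bl (Suc j)"
            using bleq[OF jr(1), of "bl (Suc j)"] bl[OF jr(2)] True by auto
          then show ?thesis using True j0 unfolding f0_def by simp
        next
          case F: False
          have "snd (bl j) = j"
          proof (rule ccontr)
            assume "snd (bl j) \<noteq> j"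
            hence "Suc j \<le> snd (bl j)" using bl[OF jr(1)] by auto
            hence "bl (Suc j) = bl j" using bleq[OF jr(2), of "bl j"] bl[OF jr(1)] by auto
            thus False using F bl[OF jr(1)] by auto
          qed
          hence "D j = 0" unfolding D_def by simp
          then show ?thesis using F unfolding f0_def by simp
        qed
      qed
    qed
    also have "\<dots> = (\<Sum>j\<in>{1..<n}. D j * z ^ Suc j)"
    proof -
      have "(\<Sum>j<n. if 1 \<le> j then D j * z ^ Suc j else 0) = (\<Sum>j\<in>{j\<in>{..<n}. 1 \<le> j}. D j * z ^ Suc j)"
        by (rule sum.inter_filter[symmetric]) simp
      also have "{j\<in>{..<n}. 1 \<le> j} = {1..<n}" by auto
      finally show ?thesis .
    qed
    also have "\<dots> = (\<Sum>j=1..n. D j * z ^ Suc j)"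
    proof -
      have nn: "n \<in> {1..n}" using False by auto
      have "D n = 0" using blb[OF nn] bl[OF nn] unfolding D_def by auto
      moreover have "{1..n} = insert n {1..<n}" using False by auto
      ultimately show ?thesis by simp
    qed
    also have "\<dots> = z * (\<Sum>k=1..n. D k * z ^ k)"
      by (simp add: sum_distrib_left algebra_simps)
    finally show ?thesis .
  qed
  have "Ppoly n X z - Ppoly n Y z = (\<Sum>k=1..n. (X k - Y k) * z ^ k)"
    unfolding Ppoly_def by (simp add: sum_subtractf algebra_simps)
  also have "\<dots> \<ge> (\<Sum>k=1..n. (- D k + \<rho> * f0 k) * z ^ k)"
    by (rule sum_mono) (use tm zpos in \<open>auto intro: mult_right_mono\<close>)
  moreover have "(\<Sum>k=1..n. (- D k + \<rho> * f0 k) * z ^ k) = - (\<Sum>k=1..n. D k * z ^ k) + \<rho> * (\<Sum>k=1..n. f0 k * z ^ k)"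
  proof -
    have "(\<Sum>k=1..n. (- D k + \<rho> * f0 k) * z ^ k) = (\<Sum>k=1..n. \<rho> * (f0 k * z ^ k) - D k * z ^ k)"
      by (rule sum.cong) (auto simp: algebra_simps)
    also have "\<dots> = \<rho> * (\<Sum>k=1..n. f0 k * z ^ k) - (\<Sum>k=1..n. D k * z ^ k)"
      by (simp only: sum_subtractf sum_distrib_left)
    finally show ?thesis by linarith
  qed
  ultimately have main: "Ppoly n X z - Ppoly n Y z \<ge> - (\<Sum>k=1..n. D k * z ^ k) + \<rho> * (z * (\<Sum>k=1..n. D k * z ^ k))"
    using shift arg_cong[OF shift, of "\<lambda>w. \<rho> * w"] by linarith
  have "(\<rho> * z - 1) * (\<Sum>k=1..n. D k * z ^ k) = - (\<Sum>k=1..n. D k * z ^ k) + \<rho> * (z * (\<Sum>k=1..n. D k * z ^ k))"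
    by (simp add: algebra_simps)
  then show ?thesis using main unfolding X_def[symmetric] Y_def[symmetric] K[folded X_def] by linarith
qed

end
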